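(* Let $n\ge4$. (i) A polyphenyl hexagonal chain $\overline{G}_n$ with $n$ hexagons has the minimum (respectively, second minimal, third minimal) Wiener index among all polyphenyl hexagonal chains with $n$ hexagons if and only if its hexagonal squeeze $G_n$ has the minimum (respectively, second minimal, third minimal) Wiener index among all spiro hexagonal chains with $n$ hexagons. (ii) $\overline{G}_n$ has the maximum (respectively, second maximal, third maximal) Wiener index among all polyphenyl hexagonal chains with $n$ hexagons if and only if $G_n$ has the maximum (respectively, second maximal, third maximal) Wiener index among all spiro hexagonal chains with $n$ hexagons.
   Context: The Wiener index is $W(G)=\sum_{\{u,v\}\subseteq V(G)}d_G(u,v)$, $d_G$ the shortest-path distance. A spiro hexagonal chain with $n$ hexagons is a connected graph whose blocks are $n$ hexagons (6-cycles) $H_0,\dots,H_{n-1}$, where $H_{k-1}$ and $H_k$ share exactly one cut-vertex for $1\le k\le n-1$, each cut-vertex is shared by exactly two hexagons and each hexagon has at most two cut-vertices. A polyphenyl hexagonal chain $\overline{G}_n=\overline{H}_0\cdots\overline{H}_{n-1}$ consists of pairwise vertex-disjoint hexagons together with cut-edges: $\overline{G}_1=\overline{H}_0$, and for $k\ge1$, $\overline{G}_{k+1}$ is obtained from $\overline{G}_k$ by adding $\overline{H}_k$ and a cut-edge joining a vertex $c_k$ of $\overline{H}_k$ to a vertex $t_k$ of $\overline{H}_{k-1}$, with $t_k\ne c_{k-1}$ for $k\ge2$. The hexagonal squeeze of $\overline{G}_n$ is the spiro hexagonal chain obtained by contracting each cut-edge $c_kt_k$ to a vertex; this gives a bijection (up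 to isomorphism) between polyphenyl and spiro hexagonal chains with $n$ hexagons. Chains are considered up to isomorphism. *)

theory Defs
  imports Main
begin

inductive walk_len :: "'a set \<Rightarrow> ('a \<Rightarrow> 'a \<Rightarrow> bool) \<Rightarrow> nat \<Rightarrow> 'a \<Rightarrow> 'a \<Rightarrow> bool"
  for V E where
  wl0: "v \<in> V \<Longrightarrow> walk_len V E 0 v v"
| wlS: "walk_len V E m u w \<Longrightarrow> E w v \<Longrightarrow> v \<in> V \<Longrightarrow> walk_len V E (Suc m) u v"

definition gdist :: "'a set \<Rightarrow> ('a \<Rightarrow> 'a \<Rightarrow> bool) \<Rightarrow> 'a \<Rightarrow> 'a \<Rightarrow> nat" where
  "gdist V E u v = (LEAST m. walk_len V E m u v)"

(* Wiener index: sum over unordered pairs = half the sum over ordered pairs *)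
definition wiener :: "'a set \<Rightarrow> ('a \<Rightarrow> 'a \<Rightarrow> bool) \<Rightarrow> nat" where
  "wiener V E = (\<Sum>u\<in>V. \<Sum>v\<in>V. gdist V E u v) div 2"

(* Hexagon k has vertices (k,0),...,(k,5), forming the 6-cycle (k,i)-(k,(i+1) mod 6). *)
definition hex_adj :: "nat \<times> nat \<Rightarrow> nat \<times> nat \<Rightarrow> bool" where
  "hex_adj x y \<longleftrightarrow> fst x = fst y \<and>
     (snd y = (snd x + 1) mod 6 \<or> snd x = (snd y + 1) mod 6)"

definition hex_vertices :: "nat \<Rightarrow> (nat \<times> nat) set" where
  "hex_vertices n = {(k, i). k < n \<and> i < 6}"

(* Valid chain data: c k = vertex c_k of hexagon k, t k = vertex t_k of hexagon k-1
   (for 1 <= k <= n-1), with t_k ~= c_{k-1} for k >= 2. *)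
definition chain_param :: "nat \<Rightarrow> (nat \<Rightarrow> nat) \<Rightarrow> (nat \<Rightarrow> nat) \<Rightarrow> bool" where
  "chain_param n c t \<longleftrightarrow> (\<forall>k<n. c k < 6 \<and> t k < 6) \<and>
     (\<forall>k. 2 \<le> k \<and> k < n \<longrightarrow> t k \<noteq> c (k - 1))"

definition poly_V :: "nat \<Rightarrow> (nat \<times> nat) set" where
  "poly_V n = hex_vertices n"

definition poly_E :: "nat \<Rightarrow> (nat \<Rightarrow> nat) \<Rightarrow> (nat \<Rightarrow> nat) \<Rightarrow> nat \<times> nat \<Rightarrow> nat \<times> nat \<Rightarrow> bool" where
  "poly_E n c t x y \<longleftrightarrow> x \<in> poly_V n \<and> y \<in> poly_V n \<and>
     (hex_adj x y \<or> (\<exists>k. 1 \<le> k \<and> k < n \<and>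
        ((x = (k, c k) \<and> y = (k - 1, t k)) \<or> (y = (k, c k) \<and> x = (k - 1, t k)))))"

(* Hexagonal squeeze / spiro chain: contract every cut-edge, i.e. identify
   vertex (k, c k) of hexagon k with vertex (k-1, t k) of hexagon k-1. *)
definition spiro_rep :: "(nat \<Rightarrow> nat) \<Rightarrow> (nat \<Rightarrow> nat) \<Rightarrow> nat \<times> nat \<Rightarrow> nat \<times> nat" where
  "spiro_rep c t x = (if 1 \<le> fst x \<and> snd x = c (fst x) then (fst x - 1, t (fst x)) else x)"

definition spiro_V :: "nat \<Rightarrow> (nat \<Rightarrow> nat) \<Rightarrow> (nat \<Rightarrow> nat) \<Rightarrow> (nat \<times> nat) set" where
  "spiro_V n c t = spiro_rep c t ` hex_vertices n"

definition spiro_E :: "nat \<Rightarrow> (nat \<Rightarrow> nat) \<Rightarrow> (nat \<Rightarrow> nat) \<Rightarrow> nat \<times> nat \<Rightarrow> nat \<times> nat \<Rightarrow> bool" where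
  "spiro_E n c t x y \<longleftrightarrow> (\<exists>a b. a \<in> hex_vertices n \<and> b \<in> hex_vertices n \<and> hex_adj a b \<and>
      x = spiro_rep c t a \<and> y = spiro_rep c t b)"

definition W_poly :: "nat \<Rightarrow> (nat \<Rightarrow> nat) \<Rightarrow> (nat \<Rightarrow> nat) \<Rightarrow> nat" where
  "W_poly n c t = wiener (poly_V n) (poly_E n c t)"

definition W_spiro :: "nat \<Rightarrow> (nat \<Rightarrow> nat) \<Rightarrow> (nat \<Rightarrow> nat) \<Rightarrow> nat" where
  "W_spiro n c t = wiener (spiro_V n c t) (spiro_E n c t)"

definition poly_values :: "nat \<Rightarrow> nat set" where
  "poly_values n = {W_poly n c t | c t. chain_param n c t}"

definition spiro_values :: "nat \<Rightarrow> nat set" where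
  "spiro_values n = {W_spiro n c t | c t. chain_param n c t}"

(* j-th smallest / largest element (j = 0 is the minimum / maximum) *)
definition kth_min :: "nat set \<Rightarrow> nat \<Rightarrow> nat" where
  "kth_min A j = sorted_list_of_set A ! j"

definition kth_max :: "nat set \<Rightarrow> nat \<Rightarrow> nat" where
  "kth_max A j = rev (sorted_list_of_set A) ! j"

end

theory Submission
  imports Defs
begin


definition hd6 :: "nat \<Rightarrow> nat \<Rightarrow> nat" where
  "hd6 a b = min ((a + 6 - b) mod 6) ((b + 6 - a) mod 6)"
lemma six_cases: "a < (6::nat) \<Longrightarrow> a = 0 \<or> a = 1 \<or> a = 2 \<or> a = 3 \<or> a = 4 \<or> a = 5"
  by auto
lemma hd6_sym: "hd6 a b = hd6 b a"
  by (simp add: hd6_def min.commute)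

lemma hd6_refl[simp]: "hd6 a a = 0"
  by (simp add: hd6_def)

lemma hd6_zero: assumes "a < 6" "b < 6" shows "hd6 a b = 0 \<Longrightarrow> a = b"
  using six_cases[OF assms(1)] six_cases[OF assms(2)] by (elim disjE) (simp_all add: hd6_def)

lemma hd6_le3: assumes "a < 6" "b < 6" shows "hd6 a b \<le> 3"
  using six_cases[OF assms(1)] six_cases[OF assms(2)] by (elim disjE) (simp_all add: hd6_def)

lemma hd6_lip1: assumes "p < 6" "b < 6" shows "hd6 p (Suc b mod 6) \<le> hd6 p b + 1"
  using six_cases[OF assms(1)] six_cases[OF assms(2)] by (elim disjE) (simp_all add: hd6_def)

lemma hd6_lip2: assumes "p < 6" "b < 6" shows "hd6 p b \<le> hd6 p (Suc b mod 6) + 1"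
  using six_cases[OF assms(1)] six_cases[OF assms(2)] by (elim disjE) (simp_all add: hd6_def)

lemma hd6_lip: assumes "p < 6" "b < 6" "b' < 6" shows "(b' = Suc b mod 6 \<or> b = Suc b' mod 6) \<Longrightarrow>
   hd6 p b' \<le> hd6 p b + 1"
  using hd6_lip1[OF assms(1,2)] hd6_lip2[OF assms(1,3)] by auto

lemma hd6_step: "p < 6 \<Longrightarrow> b < 6 \<Longrightarrow> p \<noteq> b \<Longrightarrow>
   \<exists>b'<6. (b' = Suc b mod 6 \<or> b = Suc b' mod 6) \<and> hd6 p b' + 1 = hd6 p b"
proof -
  assume a: "p < 6" "b < 6" "p \<noteq> b"
  define w where "w = (if (p + 6 - b) mod 6 \<le> 3 then Suc b mod 6 else (b + 5) mod 6)"
  have "w < 6 \<and> (w = Suc b mod 6 \<or> b = Suc w mod 6) \<and> hd6 p w + 1 = hd6 p b"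
    using six_cases[OF a(1)] six_cases[OF a(2)] a(3) unfolding w_def
    by (elim disjE) (simp_all add: hd6_def)
  thus ?thesis by blast
qed

lemma hd6_sum: assumes "p < 6" shows "(\<Sum>b<6. hd6 p b) = 9"
  using six_cases[OF assms] by (elim disjE) (simp_all add: hd6_def lessThan_nat_numeral)

lemma hd6_sum': "p < 6 \<Longrightarrow> (\<Sum>b<6. hd6 b p) = 9"
  using hd6_sum[of p] by (simp add: hd6_sym)


lemma walk_in: "walk_len V E m u v \<Longrightarrow> v \<in> V \<and> u \<in> V"
  by (induction rule: walk_len.induct) auto

lemma bfs:
  assumes u: "u \<in> V" and f0: "f u = 0"
    and lip: "\<And>x y. x \<in> V \<Longrightarrow> y \<in> V \<Longrightarrow> E x y \<Longrightarrow> f y \<le> f x + 1"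
    and pred: "\<And>v. v \<in> V \<Longrightarrow> v \<noteq> u \<Longrightarrow> \<exists>y\<in>V. E y v \<and> f y + 1 = f v"
    and v: "v \<in> V"
  shows "gdist V E u v = f v"
proof -
  have low0: "walk_len V E m x w \<Longrightarrow> f w \<le> f x + m" for m x w
  proof (induction rule: walk_len.induct)
    case (wl0 v) then show ?case by simp
  next
    case (wlS m x w v)
    have wV: "w \<in> V" using walk_in[OF wlS.hyps(1)] by blast
    have "f v \<le> f w + 1" using lip[OF wV wlS.hyps(3) wlS.hyps(2)] .
    with wlS.IH show ?case by simp
  qed
  have low: "walk_len V E m u w \<Longrightarrow> f v \<le> m" if "w = v" for m w using low0[of m u w] f0 that by simp
  have up: "\<forall>w\<in>V. f w = m \<longrightarrow> walk_len V E m u w" for m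
  proof (induction m)
    case 0
    show ?case
    proof (intro ballI impI)
      fix w assume w: "w \<in> V" "f w = 0"
      have "w = u"
      proof (rule ccontr)
        assume "w \<noteq> u" then obtain y where "f y + 1 = f w" using pred[OF w(1)] by blast
        with w show False by simp
      qed
      thus "walk_len V E 0 u w" using u walk_len.wl0 by metis
    qed
  next
    case (Suc m)
    show ?case
    proof (intro ballI impI)
      fix w assume w: "w \<in> V" "f w = Suc m"
      have "w \<noteq> u" using w f0 by auto
      then obtain y where y: "y \<in> V" "E y w" "f y + 1 = f w" using pred[OF w(1)] by blast
      have "f y = m" using y(3) w(2) by simp
      then have "walk_len V E m u y" using Suc.IH y(1) by blast
      thus "walk_len V E (Suc m) u w" using y w walk_len.wlS by metis
    qed
  qed
  have w: "walk_len V E (f v) u v" using up v by blast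
  show ?thesis unfolding gdist_def
    by (rule Least_equality[where P="\<lambda>m. walk_len V E m u v", OF w]) (rule low[OF refl])
qed



definition dd :: "(nat \<Rightarrow> nat) \<Rightarrow> (nat \<Rightarrow> nat) \<Rightarrow> nat \<Rightarrow> nat" where
  "dd c t k = hd6 (c k) (t (Suc k))"

definition dsum :: "(nat \<Rightarrow> nat) \<Rightarrow> (nat \<Rightarrow> nat) \<Rightarrow> nat \<Rightarrow> nat \<Rightarrow> nat" where
  "dsum c t p q = (\<Sum>k\<in>{p..<q}. dd c t k)"

definition Dg :: "nat \<Rightarrow> (nat \<Rightarrow> nat) \<Rightarrow> (nat \<Rightarrow> nat) \<Rightarrow> nat \<times> nat \<Rightarrow> nat \<times> nat \<Rightarrow> nat" where
  "Dg e c t x y = (if fst x = fst y then hd6 (snd x) (snd y)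
     else if fst x < fst y then hd6 (snd x) (t (Suc (fst x))) + e * (fst y - fst x)
            + dsum c t (Suc (fst x)) (fst y) + hd6 (c (fst y)) (snd y)
     else hd6 (snd y) (t (Suc (fst y))) + e * (fst x - fst y)
            + dsum c t (Suc (fst y)) (fst x) + hd6 (c (fst x)) (snd x))"

lemma dsum_empty[simp]: "dsum c t p p = 0"
  by (simp add: dsum_def)

lemma dsum_Suc_right: "p \<le> q \<Longrightarrow> dsum c t p (Suc q) = dsum c t p q + dd c t q"
  by (simp add: dsum_def)

lemma dsum_Suc_left: "p < q \<Longrightarrow> dsum c t p q = dd c t p + dsum c t (Suc p) q"
  by (simp add: dsum_def sum.atLeast_Suc_lessThan)

lemma Dg_sym: "Dg e c t x y = Dg e c t y x"
  by (auto simp: Dg_def hd6_sym)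

lemma Dg_self[simp]: "Dg e c t x x = 0"
  by (simp add: Dg_def)

lemma Dg_lt: "i < j \<Longrightarrow> Dg e c t (i,a) (j,b) =
   hd6 a (t (Suc i)) + e * (j - i) + dsum c t (Suc i) j + hd6 (c j) b"
  by (simp add: Dg_def)

lemma Dg_gt: "j < i \<Longrightarrow> Dg e c t (i,a) (j,b) =
   hd6 b (t (Suc j)) + e * (i - j) + dsum c t (Suc j) i + hd6 (c i) a"
  by (simp add: Dg_def)

lemma Dg_eq: "Dg e c t (i,a) (i,b) = hd6 a b"
  by (simp add: Dg_def)

lemma Dg_cut1:
  assumes "i \<le> k"
  shows "Dg e c t (i,a) (Suc k, c (Suc k)) = Dg e c t (i,a) (k, t (Suc k)) + e"
proof (cases "i = k")
  case True
  have "Dg e c t (i,a) (Suc k, c (Suc k)) = hd6 a (t (Suc i)) + e * (Suc k - i) + dsum c t (Suc i) (Suc k) + hd6 (c (Suc k)) (c (Suc k))"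
    using True by (intro Dg_lt) simp
  also have "\<dots> = hd6 a (t (Suc k)) + e" using True by simp
  finally show ?thesis using True by (simp add: Dg_eq)
next
  case False
  with assms have ik: "i < k" by simp
  have "Dg e c t (i,a) (Suc k, c (Suc k)) = hd6 a (t (Suc i)) + e * (Suc k - i) + dsum c t (Suc i) (Suc k) + hd6 (c (Suc k)) (c (Suc k))"
    using ik by (intro Dg_lt) simp
  also have "\<dots> = hd6 a (t (Suc i)) + e * (Suc (k - i)) + (dsum c t (Suc i) k + dd c t k)"
    using ik by (simp add: dsum_Suc_right Suc_diff_le)
  also have "\<dots> = (hd6 a (t (Suc i)) + e * (k - i) + dsum c t (Suc i) k + hd6 (c k) (t (Suc k))) + e"
    by (simp add: dd_def)
  also have "\<dots> = Dg e c t (i,a) (k, t (Suc k)) + e"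
    using ik by (simp add: Dg_lt)
  finally show ?thesis .
qed

lemma Dg_cut2:
  assumes "Suc k \<le> i"
  shows "Dg e c t (i,a) (k, t (Suc k)) = Dg e c t (i,a) (Suc k, c (Suc k)) + e"
proof (cases "i = Suc k")
  case True
  have "Dg e c t (i,a) (k, t (Suc k)) = hd6 (t (Suc k)) (t (Suc k)) + e * (i - k) + dsum c t (Suc k) i + hd6 (c i) a"
    using True by (intro Dg_gt) simp
  also have "\<dots> = hd6 a (c i) + e" using True by (simp add: hd6_sym)
  finally show ?thesis using True by (simp add: Dg_eq)
next
  case False
  with assms have ik: "Suc k < i" by simp
  have "Dg e c t (i,a) (k, t (Suc k)) = hd6 (t (Suc k)) (t (Suc k)) + e * (i - k) + dsum c t (Suc k) i + hd6 (c i) a"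
    using ik by (intro Dg_gt) simp
  also have "\<dots> = e * Suc (i - Suc k) + (dd c t (Suc k) + dsum c t (Suc (Suc k)) i) + hd6 (c i) a"
    using ik by (simp add: dsum_Suc_left Suc_diff_Suc)
  also have "\<dots> = (hd6 (c (Suc k)) (t (Suc (Suc k))) + e * (i - Suc k) + dsum c t (Suc (Suc k)) i + hd6 (c i) a) + e"
    by (simp add: dd_def)
  also have "\<dots> = Dg e c t (i,a) (Suc k, c (Suc k)) + e"
    using ik by (simp add: Dg_gt)
  finally show ?thesis .
qed

lemma Dg_lip:
  assumes rng: "\<forall>k<n. c k < 6 \<and> t k < 6" and i: "i < n" and j: "j < n"
    and ab: "a < 6" "b < 6" "b' < 6" and adj: "b' = (b + 1) mod 6 \<or> b = (b' + 1) mod 6"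
  shows "Dg e c t (i,a) (j,b') \<le> Dg e c t (i,a) (j,b) + 1"
proof -
  have adj': "b' = Suc b mod 6 \<or> b = Suc b' mod 6" using adj by simp
  consider "i = j" | "i < j" | "j < i" by linarith
  then show ?thesis
  proof cases
    case 1 then show ?thesis using hd6_lip[OF ab adj'] by (simp add: Dg_def)
  next
    case 2
    have "c j < 6" using rng j by blast
    then show ?thesis using 2 hd6_lip[OF _ ab(2,3) adj', of "c j"] by (simp add: Dg_def)
  next
    case 3
    have "t (Suc j) < 6" using rng 3 i by auto
    then show ?thesis using 3 hd6_lip[OF _ ab(2,3) adj', of "t (Suc j)"]
      by (simp add: Dg_def hd6_sym[of b'] hd6_sym[of b])
  qed
qed

lemma step_in_hex:
  assumes "p < 6" "b < 6" "p \<noteq> b"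
  shows "\<exists>b'<6. hex_adj (j,b') (j,b) \<and> hd6 p b' + 1 = hd6 p b \<and> hd6 b' p + 1 = hd6 b p"
proof -
  obtain b' where "b' < 6" "b' = Suc b mod 6 \<or> b = Suc b' mod 6" "hd6 p b' + 1 = hd6 p b"
    using hd6_step[OF assms] by blast
  then show ?thesis by (auto simp: hex_adj_def hd6_sym)
qed



lemma chain_rng: "chain_param n c t \<Longrightarrow> \<forall>k<n. c k < 6 \<and> t k < 6"
  by (simp add: chain_param_def)

lemma hex_mem: "(x \<in> hex_vertices n) = (fst x < n \<and> snd x < 6)"
  by (cases x) (simp add: hex_vertices_def)

lemma poly_dist:
  assumes ch: "chain_param n c t" and x: "x \<in> hex_vertices n" and y: "y \<in> hex_vertices n"
  shows "gdist (poly_V n) (poly_E n c t) x y = Dg 1 c t x y"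
proof -
  have rng: "\<forall>k<n. c k < 6 \<and> t k < 6" using chain_rng[OF ch] .
  obtain i a where xe: "x = (i,a)" by (cases x)
  have ia: "i < n" "a < 6" using x xe by (auto simp: hex_mem)
  show ?thesis unfolding xe
  proof (rule bfs)
    show "(i,a) \<in> poly_V n" using x xe by (simp add: poly_V_def)
    show "y \<in> poly_V n" using y by (simp add: poly_V_def)
    show "Dg 1 c t (i,a) (i,a) = 0" by simp
  next
    fix x' y' assume xV: "x' \<in> poly_V n" and yV: "y' \<in> poly_V n" and E: "poly_E n c t x' y'"
    obtain j b where xe': "x' = (j,b)" by (cases x')
    obtain j' b' where ye': "y' = (j',b')" by (cases y')
    have jb: "j < n" "b < 6" "j' < n" "b' < 6" using xV yV xe' ye' by (auto simp: poly_V_def hex_mem)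
    from E consider "hex_adj x' y'" | k where "1 \<le> k" "k < n" "x' = (k, c k)" "y' = (k - 1, t k)"
      | k where "1 \<le> k" "k < n" "y' = (k, c k)" "x' = (k - 1, t k)"
      unfolding poly_E_def by blast
    then show "Dg 1 c t (i,a) y' \<le> Dg 1 c t (i,a) x' + 1"
    proof cases
      case 1
      then have "j' = j" "b' = (b + 1) mod 6 \<or> b = (b' + 1) mod 6"
        using xe' ye' by (auto simp: hex_adj_def)
      then show ?thesis using Dg_lip[OF rng ia(1) jb(1) ia(2) jb(2) jb(4)] xe' ye' by simp
    next
      case 2
      then obtain k' where k': "k = Suc k'" by (cases k) auto
      show ?thesis
      proof (cases "i \<le> k'")
        case True then show ?thesis using Dg_cut1[OF True, of 1 c t a] 2 k' by simp
      next
        case False then have "Suc k' \<le> i" by simp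
        then show ?thesis using Dg_cut2[of k' i 1 c t a] 2 k' by simp
      qed
    next
      case 3
      then obtain k' where k': "k = Suc k'" by (cases k) auto
      show ?thesis
      proof (cases "i \<le> k'")
        case True then show ?thesis using Dg_cut1[OF True, of 1 c t a] 3 k' by simp
      next
        case False then have "Suc k' \<le> i" by simp
        then show ?thesis using Dg_cut2[of k' i 1 c t a] 3 k' by simp
      qed
    qed
  next
    fix v assume vV: "v \<in> poly_V n" and vne: "v \<noteq> (i,a)"
    obtain j b where ve: "v = (j,b)" by (cases v)
    have jb: "j < n" "b < 6" using vV ve by (auto simp: poly_V_def hex_mem)
    have adjE: "poly_E n c t (j,b') (j,b)" if "b' < 6" "hex_adj (j,b') (j,b)" for b'
      using that jb by (simp add: poly_E_def poly_V_def hex_mem)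
    consider "j = i" | "i < j" | "j < i" by linarith
    then show "\<exists>y\<in>poly_V n. poly_E n c t y v \<and> Dg 1 c t (i,a) y + 1 = Dg 1 c t (i,a) v"
    proof cases
      case 1
      then have "a \<noteq> b" using vne ve by auto
      then obtain b' where b': "b' < 6" "hex_adj (j,b') (j,b)" "hd6 a b' + 1 = hd6 a b"
        using step_in_hex[OF ia(2) jb(2)] by blast
      show ?thesis
        by (rule bexI[of _ "(j,b')"]) (use b' adjE 1 ve jb in \<open>auto simp: Dg_eq poly_V_def hex_mem\<close>)
    next
      case 2
      have cj: "c j < 6" using rng jb by blast
      show ?thesis
      proof (cases "b = c j")
        case False
        then obtain b' where b': "b' < 6" "hex_adj (j,b') (j,b)" "hd6 (c j) b' + 1 = hd6 (c j) b"
          using step_in_hex[OF cj jb(2)] by blast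
        show ?thesis
          by (rule bexI[of _ "(j,b')"]) (use b' adjE 2 ve jb in \<open>auto simp: Dg_lt poly_V_def hex_mem\<close>)
      next
        case True
        obtain k' where k': "j = Suc k'" using 2 by (cases j) auto
        have tj: "t j < 6" using rng jb by blast
        have ex: "\<exists>k. 1 \<le> k \<and> k < n \<and> ((v = (k, c k) \<and> (k', t j) = (k - 1, t k)))"
          by (rule exI[of _ j]) (use True k' ve jb in simp)
        have E: "poly_E n c t (k', t j) v"
          proof -
          have "(k', t j) \<in> poly_V n" using tj jb k' by (simp add: poly_V_def hex_mem)
          then show ?thesis unfolding poly_E_def using ex vV by blast
        qed
        have "i \<le> k'" using 2 k' by simp
        from Dg_cut1[OF this, of 1 c t a] have "Dg 1 c t (i,a) (k', t j) + 1 = Dg 1 c t (i,a) v"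
          using True k' ve by simp
        then show ?thesis using E tj jb k' by (intro bexI[of _ "(k', t j)"]) (auto simp: poly_V_def hex_mem)
      qed
    next
      case 3
      have tj: "t (Suc j) < 6" using rng 3 ia by auto
      show ?thesis
      proof (cases "b = t (Suc j)")
        case False
        then obtain b' where b': "b' < 6" "hex_adj (j,b') (j,b)" "hd6 b' (t (Suc j)) + 1 = hd6 b (t (Suc j))"
          using step_in_hex[OF tj jb(2)] by blast
        show ?thesis
          by (rule bexI[of _ "(j,b')"]) (use b' adjE 3 ve jb in \<open>auto simp: Dg_gt poly_V_def hex_mem\<close>)
      next
        case True
        have cj: "c (Suc j) < 6" using rng 3 ia by auto
        have ex: "\<exists>k. 1 \<le> k \<and> k < n \<and> (((Suc j, c (Suc j)) = (k, c k) \<and> v = (k - 1, t k)))"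
          by (rule exI[of _ "Suc j"]) (use True ve 3 ia in simp)
        have E: "poly_E n c t (Suc j, c (Suc j)) v"
          proof -
          have "(Suc j, c (Suc j)) \<in> poly_V n" using cj 3 ia by (simp add: poly_V_def hex_mem)
          then show ?thesis unfolding poly_E_def using ex vV by blast
        qed
        have "Suc j \<le> i" using 3 by simp
        from Dg_cut2[OF this, of 1 c t a] have "Dg 1 c t (i,a) (Suc j, c (Suc j)) + 1 = Dg 1 c t (i,a) v"
          using True ve by simp
        then show ?thesis using E cj 3 ia by (intro bexI[of _ "(Suc j, c (Suc j))"]) (auto simp: poly_V_def hex_mem)
      qed
    qed
  qed
qed



definition Sset :: "nat \<Rightarrow> (nat \<Rightarrow> nat) \<Rightarrow> (nat \<times> nat) set" where
  "Sset n c = {x. fst x < n \<and> snd x < 6 \<and> \<not> (1 \<le> fst x \<and> snd x = c (fst x))}"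

lemma rep_id: "x \<in> Sset n c \<Longrightarrow> spiro_rep c t x = x"
  by (cases x) (auto simp: Sset_def spiro_rep_def)

lemma rep_in:
  assumes ch: "chain_param n c t" and x: "x \<in> hex_vertices n"
  shows "spiro_rep c t x \<in> Sset n c"
proof (cases "1 \<le> fst x \<and> snd x = c (fst x)")
  case True
  then obtain k where k: "fst x = Suc k" by (cases "fst x") auto
  have "Suc k < n" using x k by (simp add: hex_mem)
  then have "t (Suc k) < 6" "1 \<le> k \<longrightarrow> t (Suc k) \<noteq> c k"
    using ch unfolding chain_param_def by (auto dest: spec[of _ "Suc k"])
  then show ?thesis using True k \<open>Suc k < n\<close> by (simp add: spiro_rep_def Sset_def)
next
  case False then show ?thesis using x by (auto simp: spiro_rep_def Sset_def hex_mem)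
qed

lemma Sset_hex: "Sset n c \<subseteq> hex_vertices n"
  by (auto simp: Sset_def hex_mem)

lemma spiro_V_eq: "chain_param n c t \<Longrightarrow> spiro_V n c t = Sset n c"
proof
  assume ch: "chain_param n c t"
  show "spiro_V n c t \<subseteq> Sset n c" using rep_in[OF ch] by (auto simp: spiro_V_def)
  show "Sset n c \<subseteq> spiro_V n c t"
  proof
    fix x assume "x \<in> Sset n c"
    then have "x = spiro_rep c t x" "x \<in> hex_vertices n" using rep_id Sset_hex by (metis, blast)
    then show "x \<in> spiro_V n c t" unfolding spiro_V_def by blast
  qed
qed

lemma Dg_rep: "Dg 0 c t u (spiro_rep c t b) = Dg 0 c t u b"
proof (cases "1 \<le> fst b \<and> snd b = c (fst b)")
  case True
  then obtain k where k: "fst b = Suc k" by (cases "fst b") auto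
  obtain i a where u: "u = (i,a)" by (cases u)
  have b: "b = (Suc k, c (Suc k))" using True k by (cases b) auto
  have r: "spiro_rep c t b = (k, t (Suc k))" using b by (simp add: spiro_rep_def)
  show ?thesis
  proof (cases "i \<le> k")
    case True then show ?thesis using Dg_cut1[OF True, of 0 c t a] u b r by simp
  next
    case False then have "Suc k \<le> i" by simp
    then show ?thesis using Dg_cut2[of k i 0 c t a] u b r by simp
  qed
next
  case False then show ?thesis by (auto simp: spiro_rep_def)
qed

lemma spiro_dist:
  assumes ch: "chain_param n c t" and x: "x \<in> Sset n c" and y: "y \<in> Sset n c"
  shows "gdist (spiro_V n c t) (spiro_E n c t) x y = Dg 0 c t x y"
proof -
  have rng: "\<forall>k<n. c k < 6 \<and> t k < 6" using chain_rng[OF ch] .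
  have VS: "spiro_V n c t = Sset n c" using spiro_V_eq[OF ch] .
  obtain i a where xe: "x = (i,a)" by (cases x)
  have ia: "i < n" "a < 6" "\<not> (1 \<le> i \<and> a = c i)" using x xe by (auto simp: Sset_def)
  have Eadj: "spiro_E n c t (spiro_rep c t p) (spiro_rep c t q)"
    if "p \<in> hex_vertices n" "q \<in> hex_vertices n" "hex_adj p q" for p q
    using that unfolding spiro_E_def by blast
  have repV: "spiro_rep c t p \<in> spiro_V n c t" if "p \<in> hex_vertices n" for p
    using that unfolding spiro_V_def by blast
  show ?thesis unfolding xe
  proof (rule bfs)
    show "(i,a) \<in> spiro_V n c t" using x xe VS by simp
    show "y \<in> spiro_V n c t" using y VS by simp
    show "Dg 0 c t (i,a) (i,a) = 0" by simp
  next
    fix x' y' assume E: "spiro_E n c t x' y'"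
    then obtain p q where pq: "p \<in> hex_vertices n" "q \<in> hex_vertices n" "hex_adj p q"
      "x' = spiro_rep c t p" "y' = spiro_rep c t q" unfolding spiro_E_def by blast
    obtain j b where pe: "p = (j,b)" by (cases p)
    obtain j' b' where qe: "q = (j',b')" by (cases q)
    have jb: "j < n" "b < 6" "j' < n" "b' < 6" using pq pe qe by (auto simp: hex_mem)
    have "j' = j" "b' = (b + 1) mod 6 \<or> b = (b' + 1) mod 6"
      using pq(3) pe qe by (auto simp: hex_adj_def)
    then have "Dg 0 c t (i,a) q \<le> Dg 0 c t (i,a) p + 1"
      using Dg_lip[OF rng ia(1) jb(1) ia(2) jb(2) jb(4)] pe qe by simp
    then show "Dg 0 c t (i,a) y' \<le> Dg 0 c t (i,a) x' + 1" using pq Dg_rep by simp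
  next
    fix v assume vV: "v \<in> spiro_V n c t" and vne: "v \<noteq> (i,a)"
    have vS: "v \<in> Sset n c" using vV VS by simp
    obtain j b where ve: "v = (j,b)" by (cases v)
    have jb: "j < n" "b < 6" "\<not> (1 \<le> j \<and> b = c j)" using vS ve by (auto simp: Sset_def)
    have rv: "spiro_rep c t (j,b) = v" using rep_id[OF vS] ve by simp
    have gen: "\<exists>y\<in>spiro_V n c t. spiro_E n c t y v \<and> Dg 0 c t (i,a) y + 1 = Dg 0 c t (i,a) v"
      if "b' < 6" "j2 < n" "hex_adj (j2,b') q" "q \<in> hex_vertices n" "spiro_rep c t q = v"
         "Dg 0 c t (i,a) (j2,b') + 1 = Dg 0 c t (i,a) q" for b' j2 q
    proof (rule bexI[of _ "spiro_rep c t (j2,b')"])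
      have h: "(j2,b') \<in> hex_vertices n" using that by (simp add: hex_mem)
      show "spiro_rep c t (j2,b') \<in> spiro_V n c t" using repV[OF h] .
      show "spiro_E n c t (spiro_rep c t (j2, b')) v \<and>
        Dg 0 c t (i, a) (spiro_rep c t (j2, b')) + 1 = Dg 0 c t (i, a) v"
        using Eadj[OF h that(4) that(3)] that(5,6) Dg_rep[of c t "(i,a)"] by metis
    qed
    have vh: "(j,b) \<in> hex_vertices n" using jb by (simp add: hex_mem)
    consider "j = i" | "i < j" | "j < i" by linarith
    then show "\<exists>y\<in>spiro_V n c t. spiro_E n c t y v \<and> Dg 0 c t (i,a) y + 1 = Dg 0 c t (i,a) v"
    proof cases
      case 1
      then have "a \<noteq> b" using vne ve by auto
      then obtain b' where b': "b' < 6" "hex_adj (j,b') (j,b)" "hd6 a b' + 1 = hd6 a b"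
        using step_in_hex[OF ia(2) jb(2)] by blast
      show ?thesis by (rule gen[OF b'(1) jb(1) b'(2) vh rv]) (use b' 1 in \<open>simp add: Dg_eq\<close>)
    next
      case 2
      have cj: "c j < 6" using rng jb by blast
      have "b \<noteq> c j" using jb 2 by auto
      then obtain b' where b': "b' < 6" "hex_adj (j,b') (j,b)" "hd6 (c j) b' + 1 = hd6 (c j) b"
        using step_in_hex[OF cj jb(2)] by blast
      show ?thesis by (rule gen[OF b'(1) jb(1) b'(2) vh rv]) (use b' 2 in \<open>simp add: Dg_lt\<close>)
    next
      case 3
      have tj: "t (Suc j) < 6" using rng 3 ia by auto
      show ?thesis
      proof (cases "b = t (Suc j)")
        case False
        then obtain b' where b': "b' < 6" "hex_adj (j,b') (j,b)" "hd6 b' (t (Suc j)) + 1 = hd6 b (t (Suc j))"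
          using step_in_hex[OF tj jb(2)] by blast
        show ?thesis by (rule gen[OF b'(1) jb(1) b'(2) vh rv]) (use b' 3 in \<open>simp add: Dg_gt\<close>)
      next
        case True
        define j' where "j' = Suc j"
        have j'i: "j' \<le> i" using 3 j'_def by simp
        have cj: "c j' < 6" using rng j'i ia by auto
        have qh: "(j', c j') \<in> hex_vertices n" using cj j'i ia by (simp add: hex_mem)
        have rq: "spiro_rep c t (j', c j') = v" using True ve j'_def by (simp add: spiro_rep_def)
        show ?thesis
        proof (cases "j' = i")
          case True
          have "a \<noteq> c i" using ia True j'_def by auto
          then obtain b' where b': "b' < 6" "hex_adj (i,b') (i,c i)" "hd6 a b' + 1 = hd6 a (c i)"
            using step_in_hex[OF ia(2), of "c i"] cj True by auto
          have qi: "(i, c i) \<in> hex_vertices n" "spiro_rep c t (i, c i) = v" using qh rq True by simp_all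
          show ?thesis by (rule gen[OF b'(1) ia(1) b'(2) qi]) (use b'(3) in \<open>simp add: Dg_eq\<close>)
        next
          case False
          then have lt: "j' < i" using j'i by simp
          have tj': "t (Suc j') < 6" using rng lt ia by auto
          have ne: "t (Suc j') \<noteq> c j'"
            using ch lt ia j'_def unfolding chain_param_def by (auto dest: spec[of _ "Suc j'"])
          then obtain b' where b': "b' < 6" "hex_adj (j',b') (j',c j')"
            "hd6 b' (t (Suc j')) + 1 = hd6 (c j') (t (Suc j'))"
            using step_in_hex[OF tj' cj] by auto
          have j'n: "j' < n" using lt ia by simp
          show ?thesis by (rule gen[OF b'(1) j'n b'(2) qh rq]) (use b' lt in \<open>simp add: Dg_gt\<close>)
        qed
      qed
    qed
  qed
qed



definition Yv :: "(nat \<Rightarrow> nat) \<Rightarrow> (nat \<Rightarrow> nat) \<Rightarrow> nat \<Rightarrow> nat" where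
  "Yv c t n = (\<Sum>i<n. dsum c t (Suc i) n)"

definition Xv :: "(nat \<Rightarrow> nat) \<Rightarrow> (nat \<Rightarrow> nat) \<Rightarrow> nat \<Rightarrow> nat" where
  "Xv c t n = (\<Sum>m<n. Yv c t m)"

definition TT :: "nat \<Rightarrow> (nat \<Rightarrow> nat) \<Rightarrow> (nat \<Rightarrow> nat) \<Rightarrow> (nat \<Rightarrow> nat set) \<Rightarrow> nat \<Rightarrow> nat" where
  "TT e c t A n = (\<Sum>i<n. \<Sum>a\<in>A i. \<Sum>j<n. \<Sum>b\<in>A j. Dg e c t (i,a) (j,b))"

definition Cr :: "nat \<Rightarrow> (nat \<Rightarrow> nat) \<Rightarrow> (nat \<Rightarrow> nat) \<Rightarrow> (nat \<Rightarrow> nat set) \<Rightarrow> nat \<Rightarrow> nat" where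
  "Cr e c t A n = (\<Sum>i<n. \<Sum>a\<in>A i. \<Sum>b\<in>A n. Dg e c t (i,a) (n,b))"

definition Dd :: "nat \<Rightarrow> (nat \<Rightarrow> nat) \<Rightarrow> (nat \<Rightarrow> nat) \<Rightarrow> (nat \<Rightarrow> nat set) \<Rightarrow> nat \<Rightarrow> nat" where
  "Dd e c t A n = (\<Sum>a\<in>A n. \<Sum>b\<in>A n. Dg e c t (n,a) (n,b))"

lemma Xv_Suc: "Xv c t (Suc n) = Xv c t n + Yv c t n"
  by (simp add: Xv_def)

lemma TT_Suc: "TT e c t A (Suc n) = TT e c t A n + 2 * Cr e c t A n + Dd e c t A n"
proof -
  have "TT e c t A (Suc n) = (\<Sum>i<Suc n. \<Sum>a\<in>A i. (\<Sum>j<n. \<Sum>b\<in>A j. Dg e c t (i,a) (j,b)) + (\<Sum>b\<in>A n. Dg e c t (i,a) (n,b)))"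
    by (simp add: TT_def)
  also have "\<dots> = (\<Sum>i<Suc n. \<Sum>a\<in>A i. \<Sum>j<n. \<Sum>b\<in>A j. Dg e c t (i,a) (j,b)) + (\<Sum>i<Suc n. \<Sum>a\<in>A i. \<Sum>b\<in>A n. Dg e c t (i,a) (n,b))"
    by (simp add: sum.distrib)
  also have "(\<Sum>i<Suc n. \<Sum>a\<in>A i. \<Sum>j<n. \<Sum>b\<in>A j. Dg e c t (i,a) (j,b)) = TT e c t A n + (\<Sum>a\<in>A n. \<Sum>j<n. \<Sum>b\<in>A j. Dg e c t (n,a) (j,b))"
    by (simp add: TT_def)
  also have "(\<Sum>a\<in>A n. \<Sum>j<n. \<Sum>b\<in>A j. Dg e c t (n,a) (j,b)) = (\<Sum>j<n. \<Sum>a\<in>A n. \<Sum>b\<in>A j. Dg e c t (j,b) (n,a))"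
    by (subst sum.swap) (simp add: Dg_sym)
  also have "\<dots> = Cr e c t A n"
    unfolding Cr_def by (rule sum.cong[OF refl]) (rule sum.swap)
  also have "(\<Sum>i<Suc n. \<Sum>a\<in>A i. \<Sum>b\<in>A n. Dg e c t (i,a) (n,b)) = Cr e c t A n + Dd e c t A n"
    by (simp add: Cr_def Dd_def)
  finally show ?thesis by simp
qed

lemma chain_Suc: "chain_param (Suc n) c t \<Longrightarrow> chain_param n c t"
  by (simp add: chain_param_def)

abbreviation A6 :: "nat \<Rightarrow> nat set" where "A6 \<equiv> (\<lambda>_. {..<6})"

lemma sum6_const: "(\<Sum>a<(6::nat). f a + (k::nat)) = (\<Sum>a<6. f a) + 6 * k"
  by (simp add: sum.distrib)

lemma Cr_poly:
  assumes ch: "chain_param (Suc n) c t"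
  shows "Cr e c t A6 n = (\<Sum>i<n. 108 + 36 * (e * (n - i))) + 36 * Yv c t n"
proof -
  have rng: "\<forall>k<Suc n. c k < 6 \<and> t k < 6" using chain_rng[OF ch] .
  have cn: "c n < 6" using rng by simp
  have inner: "(\<Sum>a<6. \<Sum>b<6. Dg e c t (i,a) (n,b)) = 108 + 36 * (e * (n - i)) + 36 * dsum c t (Suc i) n"
    if i: "i < n" for i
  proof -
    have ti: "t (Suc i) < 6" using rng i by simp
    define K where "K = e * (n - i) + dsum c t (Suc i) n"
    have "(\<Sum>a<6. \<Sum>b<6. Dg e c t (i,a) (n,b)) =
          (\<Sum>a<6. \<Sum>b<6. hd6 (c n) b + (hd6 a (t (Suc i)) + K))"
      using i by (simp add: Dg_lt K_def add.commute add.left_commute)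
    also have "\<dots> = (\<Sum>a<6. 6 * hd6 a (t (Suc i)) + (6 * K + 9))"
      by (rule sum.cong[OF refl]) (subst sum6_const, subst hd6_sum[OF cn], simp)
    also have "\<dots> = 6 * (\<Sum>a<6. hd6 a (t (Suc i))) + 6 * (6 * K + 9)"
      by (simp only: sum6_const sum_distrib_left[symmetric])
    also have "\<dots> = 108 + 36 * (e * (n - i)) + 36 * dsum c t (Suc i) n"
      by (simp add: hd6_sum'[OF ti] K_def)
    finally show ?thesis .
  qed
  have "Cr e c t A6 n = (\<Sum>i<n. 108 + 36 * (e * (n - i)) + 36 * dsum c t (Suc i) n)"
    unfolding Cr_def using inner by (intro sum.cong) auto
  also have "\<dots> = (\<Sum>i<n. 108 + 36 * (e * (n - i))) + 36 * Yv c t n"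
    by (simp add: sum.distrib Yv_def sum_distrib_left)
  finally show ?thesis .
qed

lemma Dd_poly: "Dd e c t A6 n = 54"
  by (simp add: Dd_def Dg_eq hd6_sum)

lemma TT_poly_rel:
  "chain_param n c t \<Longrightarrow> chain_param n c' t' \<Longrightarrow>
   TT e c t A6 n + 72 * Xv c' t' n = TT e c' t' A6 n + 72 * Xv c t n"
proof (induction n)
  case 0 then show ?case by (simp add: TT_def Xv_def)
next
  case (Suc n)
  have IH: "TT e c t A6 n + 72 * Xv c' t' n = TT e c' t' A6 n + 72 * Xv c t n"
    using Suc chain_Suc by blast
  show ?case using IH Cr_poly[OF Suc.prems(1), of e] Cr_poly[OF Suc.prems(2), of e]
    by (simp add: TT_Suc Xv_Suc Dd_poly)
qed



definition Aset :: "(nat \<Rightarrow> nat) \<Rightarrow> nat \<Rightarrow> nat set" where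
  "Aset c i = {a. a < 6 \<and> \<not> (1 \<le> i \<and> a = c i)}"

lemma Aset0: "Aset c 0 = {..<6}"
  by (auto simp: Aset_def)

lemma Aset_Suc: "Aset c (Suc i) = {..<6} - {c (Suc i)}"
  by (auto simp: Aset_def)

lemma Aset_sum: "c (Suc i) < 6 \<Longrightarrow> (\<Sum>b\<in>Aset c (Suc i). g b) + g (c (Suc i)) = (\<Sum>b<6. g b)"
  unfolding Aset_Suc by (subst sum.remove[of "{..<6}" "c (Suc i)"]) (auto simp: add.commute)

lemma Aset_card: "c (Suc i) < 6 \<Longrightarrow> card (Aset c (Suc i)) = 5"
  unfolding Aset_Suc by simp

lemma hd6_sumA: "c (Suc i) < 6 \<Longrightarrow> (\<Sum>b\<in>Aset c (Suc i). hd6 (c (Suc i)) b) = 9"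
  using Aset_sum[of c i "hd6 (c (Suc i))"] hd6_sum[of "c (Suc i)"] by simp

lemma sumA_const: "c (Suc i) < 6 \<Longrightarrow> (\<Sum>b\<in>Aset c (Suc i). f b + (k::nat)) = (\<Sum>b\<in>Aset c (Suc i). f b) + 5 * k"
  by (simp add: sum.distrib Aset_card)

lemma dsum_shift: "dsum c t (Suc 0) (Suc m) = (\<Sum>i<m. dd c t (Suc i))"
  unfolding dsum_def using sum.shift_bounds_Suc_ivl[of "dd c t" 0 m]
  by (simp add: atLeast0LessThan)

lemma Cr_spiro:
  assumes ch: "chain_param (Suc n) c t"
  shows "Cr 0 c t (Aset c) n = (if n = 0 then 0 else 99 + 90 * (n - 1)) + 25 * Yv c t n"
proof (cases n)
  case 0 then show ?thesis by (simp add: Cr_def Yv_def)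
next
  case (Suc m)
  have rng: "\<forall>k<Suc n. c k < 6 \<and> t k < 6" using chain_rng[OF ch] .
  have cn: "c (Suc m) < 6" using rng Suc by simp
  define ds where "ds i = dsum c t (Suc i) n" for i
  define H where "H i = (\<Sum>a\<in>Aset c i. hd6 a (t (Suc i)))" for i
  define F where "F i = 5 * H i + card (Aset c i) * (5 * ds i + 9)" for i
  have inner: "(\<Sum>a\<in>Aset c i. \<Sum>b\<in>Aset c n. Dg 0 c t (i,a) (n,b)) = F i" if i: "i < n" for i
  proof -
    have dg: "Dg 0 c t (i,a) (n,b) = hd6 (c n) b + (hd6 a (t (Suc i)) + ds i)" for a b
      using i by (simp add: Dg_lt ds_def ac_simps)
    have "(\<Sum>a\<in>Aset c i. \<Sum>b\<in>Aset c n. Dg 0 c t (i,a) (n,b)) =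
          (\<Sum>a\<in>Aset c i. \<Sum>b\<in>Aset c n. hd6 (c n) b + (hd6 a (t (Suc i)) + ds i))"
      by (simp only: dg)
    also have "\<dots> = (\<Sum>a\<in>Aset c i. \<Sum>b\<in>Aset c (Suc m). hd6 (c (Suc m)) b + (hd6 a (t (Suc i)) + ds i))"
      using Suc by simp
    also have "\<dots> = (\<Sum>a\<in>Aset c i. 5 * hd6 a (t (Suc i)) + (5 * ds i + 9))"
      by (rule sum.cong[OF refl]) (subst sumA_const[of c m, OF cn], subst hd6_sumA[of c m, OF cn], simp)
    also have "\<dots> = F i"
      by (simp add: sum.distrib F_def H_def sum_distrib_left)
    finally show ?thesis .
  qed
  have "Cr 0 c t (Aset c) n = (\<Sum>i<n. F i)"
    unfolding Cr_def using inner by (intro sum.cong) auto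
  also have "\<dots> = F 0 + (\<Sum>i<m. F (Suc i))"
    unfolding Suc by (rule sum.lessThan_Suc_shift)
  finally have cr: "Cr 0 c t (Aset c) n = F 0 + (\<Sum>i<m. F (Suc i))" .
  have t1: "t (Suc 0) < 6" using rng Suc by simp
  have F0: "F 0 = 99 + 30 * ds 0"
    by (simp add: F_def H_def Aset0 hd6_sum'[OF t1])
  have FS: "F (Suc i) + 5 * dd c t (Suc i) = 90 + 25 * ds (Suc i)" if i: "i < m" for i
  proof -
    have ci: "c (Suc i) < 6" "t (Suc (Suc i)) < 6" using rng i Suc by auto
    have "H (Suc i) + dd c t (Suc i) = 9"
      using Aset_sum[of c i "\<lambda>a. hd6 a (t (Suc (Suc i)))", OF ci(1)] hd6_sum'[OF ci(2)]
      by (simp add: H_def dd_def hd6_sym)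
    then show ?thesis using ci by (simp add: F_def Aset_card)
  qed
  have "(\<Sum>i<m. F (Suc i)) + 5 * (\<Sum>i<m. dd c t (Suc i)) = (\<Sum>i<m. 90 + 25 * ds (Suc i))"
    using FS by (simp add: sum_distrib_left sum.distrib[symmetric])
  moreover have "(\<Sum>i<m. dd c t (Suc i)) = ds 0"
    using Suc by (simp add: ds_def dsum_shift)
  moreover have "Yv c t n = ds 0 + (\<Sum>i<m. ds (Suc i))"
    unfolding Yv_def ds_def Suc by (rule sum.lessThan_Suc_shift)
  ultimately show ?thesis using cr F0 Suc by (simp add: sum.distrib sum_distrib_left)
qed

lemma Dd_spiro:
  assumes ch: "chain_param (Suc n) c t"
  shows "Dd 0 c t (Aset c) n = (if n = 0 then 54 else 36)"
proof (cases n)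
  case 0 then show ?thesis by (simp add: Dd_def Dg_eq Aset0 hd6_sum)
next
  case (Suc m)
  have cn: "c (Suc m) < 6" using chain_rng[OF ch] Suc by simp
  have "(\<Sum>a\<in>Aset c (Suc m). \<Sum>b\<in>Aset c (Suc m). hd6 a b) + (\<Sum>a\<in>Aset c (Suc m). hd6 a (c (Suc m)))
     = (\<Sum>a\<in>Aset c (Suc m). (\<Sum>b\<in>Aset c (Suc m). hd6 a b) + hd6 a (c (Suc m)))"
    by (simp add: sum.distrib)
  also have "\<dots> = (\<Sum>a\<in>Aset c (Suc m). 9)"
  proof (rule sum.cong[OF refl])
    fix a assume "a \<in> Aset c (Suc m)"
    then have "a < 6" by (simp add: Aset_def)
    then show "(\<Sum>b\<in>Aset c (Suc m). hd6 a b) + hd6 a (c (Suc m)) = 9"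
      using Aset_sum[of c m "hd6 a", OF cn] hd6_sum by simp
  qed
  also have "\<dots> = 45" using Aset_card[of c m, OF cn] by simp
  finally have A: "(\<Sum>a\<in>Aset c (Suc m). \<Sum>b\<in>Aset c (Suc m). hd6 a b) + (\<Sum>a\<in>Aset c (Suc m). hd6 a (c (Suc m))) = 45" .
  have B: "(\<Sum>a\<in>Aset c (Suc m). hd6 a (c (Suc m))) = 9"
    using Aset_sum[of c m "\<lambda>a. hd6 a (c (Suc m))", OF cn] hd6_sum'[OF cn] by simp
  show ?thesis using A B Suc by (simp add: Dd_def Dg_eq)
qed

lemma TT_spiro_rel:
  "chain_param n c t \<Longrightarrow> chain_param n c' t' \<Longrightarrow>
   TT 0 c t (Aset c) n + 50 * Xv c' t' n = TT 0 c' t' (Aset c') n + 50 * Xv c t n"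
proof (induction n)
  case 0 then show ?case by (simp add: TT_def Xv_def)
next
  case (Suc n)
  have IH: "TT 0 c t (Aset c) n + 50 * Xv c' t' n = TT 0 c' t' (Aset c') n + 50 * Xv c t n"
    using Suc chain_Suc by blast
  show ?case using IH Cr_spiro[OF Suc.prems(1)] Cr_spiro[OF Suc.prems(2)]
      Dd_spiro[OF Suc.prems(1)] Dd_spiro[OF Suc.prems(2)]
    by (simp add: TT_Suc Xv_Suc)
qed



lemma sorted_map_strict:
  assumes fin: "finite S" and sm: "strict_mono_on S g"
  shows "sorted_list_of_set (g ` S) = map g (sorted_list_of_set S)"
proof -
  let ?L = "sorted_list_of_set S"
  have inj: "inj_on g S" using sm by (rule strict_mono_on_imp_inj_on)
  have ss: "sorted_wrt (<) ?L" using sorted_list_of_set_unique[OF fin, of ?L] by simp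
  have "sorted_wrt (<) (map g ?L)"
  proof (rule sorted_wrt_map_mono[OF ss])
    fix x y assume "x \<in> set ?L" "y \<in> set ?L" "x < y"
    then show "g x < g y" using sm fin by (auto simp: strict_mono_on_def)
  qed
  moreover have "set (map g ?L) = g ` S" using fin by simp
  moreover have "length (map g ?L) = card (g ` S)" using fin inj by (simp add: card_image)
  ultimately show ?thesis using sorted_list_of_set_unique[of "g ` S" "map g ?L"] fin by simp
qed

lemma rank_transfer:
  fixes W X :: "'p \<Rightarrow> nat"
  assumes rel: "\<And>p q. p \<in> R \<Longrightarrow> q \<in> R \<Longrightarrow> W p + k * X q = W q + k * X p"
    and k: "k > 0" and fin: "finite (X ` R)" and j: "j < card (X ` R)" and p: "p \<in> R"
  shows "(W p = sorted_list_of_set (W ` R) ! j \<longleftrightarrow> X p = sorted_list_of_set (X ` R) ! j)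
       \<and> (W p = rev (sorted_list_of_set (W ` R)) ! j \<longleftrightarrow> X p = rev (sorted_list_of_set (X ` R)) ! j)"
proof -
  define g where "g x = W p + k * x - k * X p" for x
  have gW: "W q = g (X q)" if "q \<in> R" for q
    using rel[OF that p] by (simp add: g_def)
  have WR: "W ` R = g ` (X ` R)" using gW by (auto simp: image_image)
  have sm: "strict_mono_on (X ` R) g"
    unfolding strict_mono_on_def
  proof (intro allI impI)
    fix r s assume "r \<in> X ` R \<and> s \<in> X ` R \<and> r < s"
    then obtain q q' where q: "q \<in> R" "q' \<in> R" "r = X q" "s = X q'" "X q < X q'" by auto
    have "W q + k * X q' = W q' + k * X q" using rel[OF q(1,2)] .
    moreover have "k * X q < k * X q'" using q(5) k by simp
    ultimately have "W q < W q'" by linarith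
    then show "g r < g s" using gW q by simp
  qed
  have inj: "inj_on g (X ` R)" using sm by (rule strict_mono_on_imp_inj_on)
  let ?L = "sorted_list_of_set (X ` R)"
  have S: "sorted_list_of_set (W ` R) = map g ?L" unfolding WR by (rule sorted_map_strict[OF fin sm])
  have len: "length ?L = card (X ` R)" by simp
  have mem: "?L ! j \<in> X ` R" using j fin by (metis len nth_mem set_sorted_list_of_set)
  have memr: "rev ?L ! j \<in> X ` R" using j fin by (metis len length_rev nth_mem set_rev set_sorted_list_of_set)
  have Xp: "X p \<in> X ` R" using p by simp
  show ?thesis
    using j len inj mem memr Xp gW[OF p]
    by (simp add: S rev_map inj_on_eq_iff)
qed

lemma sum_Sigma':
  assumes "finite A" "\<And>i. i \<in> A \<Longrightarrow> finite (B i)"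
  shows "(\<Sum>u\<in>Sigma A B. f u) = (\<Sum>i\<in>A. \<Sum>a\<in>B i. f (i,a))"
  using assms by (subst sum.Sigma) (auto simp: case_prod_beta)

lemma hex_Sigma: "hex_vertices n = Sigma {..<n} A6"
  by (auto simp: hex_vertices_def)

lemma Sset_Sigma: "Sset n c = Sigma {..<n} (Aset c)"
  by (auto simp: Sset_def Aset_def)

lemma finA: "finite (Aset c i)" by (simp add: Aset_def)

lemma W_poly_TT: "chain_param n c t \<Longrightarrow> W_poly n c t = TT 1 c t A6 n div 2"
proof -
  assume ch: "chain_param n c t"
  have "(\<Sum>u\<in>poly_V n. \<Sum>v\<in>poly_V n. gdist (poly_V n) (poly_E n c t) u v) =
        (\<Sum>u\<in>poly_V n. \<Sum>v\<in>poly_V n. Dg 1 c t u v)"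
  proof (intro sum.cong refl)
    fix u v assume "u \<in> poly_V n" "v \<in> poly_V n"
    then show "gdist (poly_V n) (poly_E n c t) u v = Dg 1 c t u v"
      by (intro poly_dist[OF ch]) (simp_all add: poly_V_def)
  qed
  also have "\<dots> = TT 1 c t A6 n"
    unfolding poly_V_def hex_Sigma TT_def by (simp add: sum_Sigma')
  finally show ?thesis by (simp add: W_poly_def wiener_def)
qed

lemma W_spiro_TT: "chain_param n c t \<Longrightarrow> W_spiro n c t = TT 0 c t (Aset c) n div 2"
proof -
  assume ch: "chain_param n c t"
  have "(\<Sum>u\<in>spiro_V n c t. \<Sum>v\<in>spiro_V n c t. gdist (spiro_V n c t) (spiro_E n c t) u v) =
        (\<Sum>u\<in>spiro_V n c t. \<Sum>v\<in>spiro_V n c t. Dg 0 c t u v)"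
  proof (intro sum.cong refl)
    fix u v assume "u \<in> spiro_V n c t" "v \<in> spiro_V n c t"
    then show "gdist (spiro_V n c t) (spiro_E n c t) u v = Dg 0 c t u v"
      by (intro spiro_dist[OF ch]) (simp_all add: spiro_V_eq[OF ch])
  qed
  also have "\<dots> = TT 0 c t (Aset c) n"
    unfolding spiro_V_eq[OF ch] Sset_Sigma TT_def by (simp add: sum_Sigma' finA)
  finally show ?thesis by (simp add: W_spiro_def wiener_def)
qed

lemma W_poly_rel: "chain_param n c t \<Longrightarrow> chain_param n c' t' \<Longrightarrow>
   W_poly n c t + 36 * Xv c' t' n = W_poly n c' t' + 36 * Xv c t n"
proof -
  assume ch: "chain_param n c t" and ch': "chain_param n c' t'"
  have r: "TT 1 c t A6 n + 72 * Xv c' t' n = TT 1 c' t' A6 n + 72 * Xv c t n"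
    using TT_poly_rel[OF ch ch'] .
  have "(TT 1 c t A6 n + 72 * Xv c' t' n) div 2 = TT 1 c t A6 n div 2 + 36 * Xv c' t' n" by simp
  moreover have "(TT 1 c' t' A6 n + 72 * Xv c t n) div 2 = TT 1 c' t' A6 n div 2 + 36 * Xv c t n" by simp
  ultimately show ?thesis using r W_poly_TT[OF ch] W_poly_TT[OF ch'] by simp
qed

lemma W_spiro_rel: "chain_param n c t \<Longrightarrow> chain_param n c' t' \<Longrightarrow>
   W_spiro n c t + 25 * Xv c' t' n = W_spiro n c' t' + 25 * Xv c t n"
proof -
  assume ch: "chain_param n c t" and ch': "chain_param n c' t'"
  have r: "TT 0 c t (Aset c) n + 50 * Xv c' t' n = TT 0 c' t' (Aset c') n + 50 * Xv c t n"
    using TT_spiro_rel[OF ch ch'] .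
  have "(TT 0 c t (Aset c) n + 50 * Xv c' t' n) div 2 = TT 0 c t (Aset c) n div 2 + 25 * Xv c' t' n" by simp
  moreover have "(TT 0 c' t' (Aset c') n + 50 * Xv c t n) div 2 = TT 0 c' t' (Aset c') n div 2 + 25 * Xv c t n" by simp
  ultimately show ?thesis using r W_spiro_TT[OF ch] W_spiro_TT[OF ch'] by simp
qed



lemma dd_le3: "chain_param n c t \<Longrightarrow> Suc k < n \<Longrightarrow> dd c t k \<le> 3"
  unfolding dd_def by (rule hd6_le3) (auto simp: chain_param_def)

lemma dsum_bound: "chain_param n c t \<Longrightarrow> m < n \<Longrightarrow> dsum c t p m \<le> m * 3"
proof -
  assume ch: "chain_param n c t" and m: "m < n"
  have "dsum c t p m \<le> card {p..<m} * 3"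
    unfolding dsum_def using sum_bounded_above[of "{p..<m}" "dd c t" 3] dd_le3[OF ch] m by force
  also have "\<dots> \<le> m * 3" by simp
  finally show ?thesis .
qed

lemma Xv_bound: "chain_param n c t \<Longrightarrow> Xv c t n \<le> n * (n * (n * 3))"
proof -
  assume ch: "chain_param n c t"
  have Y: "Yv c t m \<le> n * (n * 3)" if m: "m < n" for m
  proof -
    have "Yv c t m \<le> (\<Sum>i<m. n * 3)"
      unfolding Yv_def
    proof (rule sum_mono)
      fix i assume "i \<in> {..<m}"
      have "dsum c t (Suc i) m \<le> m * 3" using dsum_bound[OF ch m] .
      also have "\<dots> \<le> n * 3" using m by simp
      finally show "dsum c t (Suc i) m \<le> n * 3" .
    qed
    also have "\<dots> \<le> n * (n * 3)" using m by simp
    finally show ?thesis .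
  qed
  have "Xv c t n \<le> (\<Sum>m<n. n * (n * 3))"
    unfolding Xv_def by (rule sum_mono) (use Y in auto)
  then show ?thesis by simp
qed

definition Qn :: "nat \<Rightarrow> nat" where "Qn n = (\<Sum>m<n. \<Sum>i<m. m - Suc i)"

lemma chain_const: "D < 6 \<Longrightarrow> D \<noteq> 0 \<Longrightarrow> chain_param n (\<lambda>_. 0) (\<lambda>_. D)"
  by (simp add: chain_param_def)

lemma Xv_const: "hd6 0 D = D \<Longrightarrow> Xv (\<lambda>_. 0) (\<lambda>_. D) n = D * Qn n"
  by (simp add: Xv_def Yv_def dsum_def dd_def Qn_def sum_distrib_left mult.commute)

lemma Qn_pos: "3 \<le> n \<Longrightarrow> 1 \<le> Qn n"
proof -
  assume n: "3 \<le> n"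
  have "(\<Sum>i<2. (2::nat) - Suc i) \<le> Qn n"
    unfolding Qn_def by (rule member_le_sum[of 2 "{..<n}" "\<lambda>m. \<Sum>i<m. m - Suc i"]) (use n in auto)
  moreover have "(\<Sum>i<2. (2::nat) - Suc i) = 1" by (simp add: numeral_2_eq_2)
  ultimately show ?thesis by simp
qed

theorem theorem4p2:
  fixes n :: nat and c t :: "nat \<Rightarrow> nat" and j :: nat
  assumes "n \<ge> 4" and "chain_param n c t" and "j < 3"
  shows "(W_poly n c t = kth_min (poly_values n) j \<longleftrightarrow>
            W_spiro n c t = kth_min (spiro_values n) j)
       \<and> (W_poly n c t = kth_max (poly_values n) j \<longleftrightarrow>
            W_spiro n c t = kth_max (spiro_values n) j)"
proof -
  define R where "R = {p. chain_param n (fst p) (snd p)}"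
  define Wp where "Wp p = W_poly n (fst p) (snd p)" for p
  define Ws where "Ws p = W_spiro n (fst p) (snd p)" for p
  define Xp where "Xp p = Xv (fst p) (snd p) n" for p
  have p: "(c,t) \<in> R" using assms(2) by (simp add: R_def)
  have PV: "poly_values n = Wp ` R"
    unfolding poly_values_def Wp_def R_def by (auto simp: image_iff; metis)
  have SV: "spiro_values n = Ws ` R"
    unfolding spiro_values_def Ws_def R_def by (auto simp: image_iff; metis)
  have relp: "Wp p + 36 * Xp q = Wp q + 36 * Xp p" if "p \<in> R" "q \<in> R" for p q
    using W_poly_rel that by (simp add: R_def Wp_def Xp_def)
  have rels: "Ws p + 25 * Xp q = Ws q + 25 * Xp p" if "p \<in> R" "q \<in> R" for p q
    using W_spiro_rel that by (simp add: R_def Ws_def Xp_def)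
  have fin: "finite (Xp ` R)"
  proof (rule finite_subset[of _ "{..n * (n * (n * 3))}"])
    show "Xp ` R \<subseteq> {..n * (n * (n * 3))}" using Xv_bound by (auto simp: R_def Xp_def)
  qed simp
  have card3: "3 \<le> card (Xp ` R)"
  proof -
    have Q: "1 \<le> Qn n" using Qn_pos assms(1) by simp
    have mem: "D * Qn n \<in> Xp ` R" if "hd6 0 D = D" "D < 6" "D \<noteq> 0" for D :: nat
    proof (rule image_eqI)
      show "D * Qn n = Xp (\<lambda>_. 0, \<lambda>_. D)" using Xv_const[OF that(1)] by (simp add: Xp_def)
      show "(\<lambda>_. 0, \<lambda>_. D) \<in> R" using chain_const[OF that(2,3)] by (simp add: R_def)
    qed
    have "{1 * Qn n, 2 * Qn n, 3 * Qn n} \<subseteq> Xp ` R"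
      using mem[of 1] mem[of 2] mem[of 3] by (simp add: hd6_def)
    moreover have "card {1 * Qn n, 2 * Qn n, 3 * Qn n} = 3" using Q by simp
    ultimately show ?thesis using card_mono[OF fin] by metis
  qed
  have j: "j < card (Xp ` R)" using assms(3) card3 by simp
  have A: "(Wp (c,t) = sorted_list_of_set (Wp ` R) ! j \<longleftrightarrow> Xp (c,t) = sorted_list_of_set (Xp ` R) ! j)
       \<and> (Wp (c,t) = rev (sorted_list_of_set (Wp ` R)) ! j \<longleftrightarrow> Xp (c,t) = rev (sorted_list_of_set (Xp ` R)) ! j)"
    by (rule rank_transfer[OF relp _ fin j p]) auto
  have B: "(Ws (c,t) = sorted_list_of_set (Ws ` R) ! j \<longleftrightarrow> Xp (c,t) = sorted_list_of_set (Xp ` R) ! j)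
       \<and> (Ws (c,t) = rev (sorted_list_of_set (Ws ` R)) ! j \<longleftrightarrow> Xp (c,t) = rev (sorted_list_of_set (Xp ` R)) ! j)"
    by (rule rank_transfer[OF rels _ fin j p]) auto
  show ?thesis using A B unfolding kth_min_def kth_max_def PV SV Wp_def Ws_def by simp
qed


end
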